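(* Let $d\ge2$, $1<p<d$, $\beta=\frac{p-1}{2p}$, $0<\delta<1/20$, $0<\varepsilon<\delta/20$. Let $S\subset\mathbb S^{d-1}$ be finite with pairwise distances at least $\varepsilon$, $K_s\subset\bar B(0,1)$ compact, $0<\alpha\le1/80$, $\Gamma=\bigcup_{s\in S}(s+\alpha\varepsilon K_s)$, and $u$ the Perron solution of $\Delta_pu=0$ in $\mathbb R^d\setminus\Gamma$, $u=1$ on $\Gamma$, $u\to0$ at $\infty$. There is $C_7=C_7(d,p)$ such that if $y\in\mathbb S^{d-1}$ and $M>0$ satisfy $\int_{\Lambda_{2\delta}(y)}|\nabla u|^p\le M\delta^{d-1}$, then the set $S_\beta$ of bad anchors satisfies $$|S_\beta\cap Q_\delta(y)|\le C_7M\delta^\beta(\delta/\varepsilon)^{d-1}.$$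
   Context: $Q_\zeta(y)=B(y,\zeta)\cap\mathbb S^{d-1}$, $\Lambda_\zeta(y)=\{rq:q\in Q_\zeta(y),r>0\}$. An anchor $s\in S$ is good if $\int_{\Lambda_\zeta(s)}|\nabla u|^p\le\zeta^{d-1-\beta}$ for all $\zeta\in[\varepsilon,\delta]$, and bad otherwise. Perron solution in the sense of nonlinear potential theory. *)

theory Defs
  imports "HOL-Analysis.Analysis" "HOL-Library.Liminf_Limsup"
begin

definition test_fun :: "'a::euclidean_space set \<Rightarrow> ('a \<Rightarrow> real) \<Rightarrow> ('a \<Rightarrow> 'a \<Rightarrow> real) \<Rightarrow> bool" where
  "test_fun U \<phi> \<phi>' \<longleftrightarrow>
     (\<forall>x. (\<phi> has_derivative \<phi>' x) (at x)) \<and>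
     (\<forall>v. continuous_on UNIV (\<lambda>x. \<phi>' x v)) \<and>
     compact (closure {x. \<phi> x \<noteq> 0}) \<and> closure {x. \<phi> x \<noteq> 0} \<subseteq> U"

definition weak_gradient :: "'a::euclidean_space set \<Rightarrow> ('a \<Rightarrow> real) \<Rightarrow> ('a \<Rightarrow> 'a) \<Rightarrow> bool" where
  "weak_gradient U u g \<longleftrightarrow>
     set_borel_measurable lborel U u \<and> set_borel_measurable lborel U g \<and>
     (\<forall>K. compact K \<and> K \<subseteq> U \<longrightarrow> set_integrable lborel K u \<and> set_integrable lborel K g) \<and>
     (\<forall>\<phi> \<phi>'. test_fun U \<phi> \<phi>' \<longrightarrow>
        (\<forall>i\<in>Basis. (LINT x:U|lborel. u x * \<phi>' x i) = - (LINT x:U|lborel. (g x \<bullet> i) * \<phi> x)))"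

definition sobolev_loc :: "real \<Rightarrow> 'a::euclidean_space set \<Rightarrow> ('a \<Rightarrow> real) \<Rightarrow> ('a \<Rightarrow> 'a) \<Rightarrow> bool" where
  "sobolev_loc p U u g \<longleftrightarrow> weak_gradient U u g \<and>
     (\<forall>K. compact K \<and> K \<subseteq> U \<longrightarrow>
        set_integrable lborel K (\<lambda>x. \<bar>u x\<bar> powr p) \<and>
        set_integrable lborel K (\<lambda>x. norm (g x) powr p))"

text \<open>Continuous weak solutions of the p-Laplace equation div(|Du|^{p-2} Du) = 0 in U.\<close>
definition p_harmonic :: "real \<Rightarrow> 'a::euclidean_space set \<Rightarrow> ('a \<Rightarrow> real) \<Rightarrow> bool" where
  "p_harmonic p U u \<longleftrightarrow> continuous_on U u \<and>
     (\<exists>g. sobolev_loc p U u g \<and>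
        (\<forall>\<phi> \<phi>'. test_fun U \<phi> \<phi>' \<longrightarrow>
           (LINT x:U|lborel. norm (g x) powr (p - 2) * \<phi>' x (g x)) = 0))"

definition p_superharmonic :: "real \<Rightarrow> 'a::euclidean_space set \<Rightarrow> ('a \<Rightarrow> ereal) \<Rightarrow> bool" where
  "p_superharmonic p U v \<longleftrightarrow>
     (\<forall>x\<in>U. v x > -\<infinity> \<and> v x \<le> Liminf (at x) v) \<and>
     (\<forall>C\<in>components U. \<exists>x\<in>C. v x < \<infinity>) \<and>
     (\<forall>D h. open D \<and> compact (closure D) \<and> closure D \<subseteq> U \<and>
        continuous_on (closure D) h \<and> p_harmonic p D h \<and>
        (\<forall>x\<in>frontier D. ereal (h x) \<le> v x) \<longrightarrow> (\<forall>x\<in>D. ereal (h x) \<le> v x))"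

definition upper_class :: "real \<Rightarrow> 'a::euclidean_space set \<Rightarrow> ('a \<Rightarrow> real) \<Rightarrow> real \<Rightarrow> ('a \<Rightarrow> ereal) set" where
  "upper_class p \<Omega> f finf = {v. p_superharmonic p \<Omega> v \<and>
      (\<exists>c. \<forall>x\<in>\<Omega>. ereal c \<le> v x) \<and>
      (\<forall>\<xi>\<in>frontier \<Omega>. ereal (f \<xi>) \<le> Liminf (at \<xi> within \<Omega>) v) \<and>
      (\<not> bounded \<Omega> \<longrightarrow> ereal finf \<le> Liminf (inf at_infinity (principal \<Omega>)) v)}"

definition upper_perron :: "real \<Rightarrow> 'a::euclidean_space set \<Rightarrow> ('a \<Rightarrow> real) \<Rightarrow> real \<Rightarrow> 'a \<Rightarrow> ereal" where
  "upper_perron p \<Omega> f finf x = (INF v\<in>upper_class p \<Omega> f finf. v x)"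

definition lower_perron :: "real \<Rightarrow> 'a::euclidean_space set \<Rightarrow> ('a \<Rightarrow> real) \<Rightarrow> real \<Rightarrow> 'a \<Rightarrow> ereal" where
  "lower_perron p \<Omega> f finf x = - upper_perron p \<Omega> (\<lambda>y. - f y) (- finf) x"

definition perron_solution :: "real \<Rightarrow> 'a::euclidean_space set \<Rightarrow> ('a \<Rightarrow> real) \<Rightarrow> real \<Rightarrow> ('a \<Rightarrow> real) \<Rightarrow> bool" where
  "perron_solution p \<Omega> f finf u \<longleftrightarrow>
     (\<forall>x\<in>\<Omega>. upper_perron p \<Omega> f finf x = ereal (u x) \<and> lower_perron p \<Omega> f finf x = ereal (u x))"

definition capQ :: "'a::euclidean_space \<Rightarrow> real \<Rightarrow> 'a set" where
  "capQ y \<zeta> = ball y \<zeta> \<inter> sphere 0 1"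

definition coneL :: "'a::euclidean_space \<Rightarrow> real \<Rightarrow> 'a set" where
  "coneL y \<zeta> = {r *\<^sub>R q | r q. q \<in> capQ y \<zeta> \<and> r > 0}"

definition Gamma_set :: "'a::euclidean_space set \<Rightarrow> ('a \<Rightarrow> 'a set) \<Rightarrow> real \<Rightarrow> real \<Rightarrow> 'a set" where
  "Gamma_set S K \<alpha> \<epsilon> = (\<Union>s\<in>S. (\<lambda>k. s + (\<alpha> * \<epsilon>) *\<^sub>R k) ` K s)"

text \<open>Energy of u in the cone, computed with the weak gradient g of u on the complement
  \<Omega> of \<Gamma> (on \<Gamma> we have u = 1, hence Du = 0 a.e. there).\<close>
definition cone_energy :: "real \<Rightarrow> 'a::euclidean_space set \<Rightarrow> ('a \<Rightarrow> 'a) \<Rightarrow> 'a \<Rightarrow> real \<Rightarrow> ennreal" where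
  "cone_energy p \<Omega> g y \<zeta> = (\<integral>\<^sup>+ x. indicator (coneL y \<zeta> \<inter> \<Omega>) x * ennreal (norm (g x) powr p) \<partial>lborel)"

definition bad_anchors :: "real \<Rightarrow> 'a::euclidean_space set \<Rightarrow> ('a \<Rightarrow> 'a) \<Rightarrow> 'a set \<Rightarrow> real \<Rightarrow> real \<Rightarrow> real \<Rightarrow> 'a set" where
  "bad_anchors p \<Omega> g S \<epsilon> \<delta> \<beta> =
     {s\<in>S. \<exists>\<zeta>\<in>{\<epsilon>..\<delta>}. cone_energy p \<Omega> g s \<zeta> > ennreal (\<zeta> powr (real DIM('a) - 1 - \<beta>))}"

end

theory Submission
  imports Defs
begin


lemma coord_diff:
  fixes s t e :: "'a::euclidean_space"
  assumes ns: "norm s = 1" and nt: "norm t = 1" and e: "e \<in> Basis" and w: "w \<ge> 0"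
    and sg: "(s\<bullet>e) * (t\<bullet>e) > 0"
    and se: "\<bar>s\<bullet>e\<bar> \<ge> 1 / real DIM('a)" and te: "\<bar>t\<bullet>e\<bar> \<ge> 1 / real DIM('a)"
    and cb: "\<forall>b\<in>Basis-{e}. \<bar>s\<bullet>b - t\<bullet>b\<bar> \<le> w"
  shows "norm (s - t) \<le> (real DIM('a) + 1) * (real DIM('a) - 1) * w"
proof -
  define d where "d = real DIM('a)"
  have d1: "d \<ge> 1" unfolding d_def using DIM_positive by (simp add: Suc_leI)
  have cardBe: "real (card (Basis - {e::'a})) = d - 1"
    using e by (simp add: d_def card_Diff_singleton of_nat_diff Suc_leI)
  have sumsq: "\<And>x::'a. norm x = 1 \<Longrightarrow> (x\<bullet>e)^2 = 1 - (\<Sum>b\<in>Basis-{e}. (x\<bullet>b)^2)"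
  proof -
    fix x :: 'a assume "norm x = 1"
    then have "x \<bullet> x = 1" by (simp add: norm_eq_sqrt_inner)
    then have "(\<Sum>b\<in>Basis. (x\<bullet>b)^2) = 1"
      using euclidean_inner[of x x] by (simp add: power2_eq_square)
    moreover have "(\<Sum>b\<in>Basis. (x\<bullet>b)^2) = (x\<bullet>e)^2 + (\<Sum>b\<in>Basis-{e}. (x\<bullet>b)^2)"
      using e by (simp add: sum.remove)
    ultimately show "(x\<bullet>e)^2 = 1 - (\<Sum>b\<in>Basis-{e}. (x\<bullet>b)^2)" by simp
  qed
  have A: "\<bar>(s\<bullet>e)^2 - (t\<bullet>e)^2\<bar> \<le> 2 * (d - 1) * w"
  proof -
    have "(s\<bullet>e)^2 - (t\<bullet>e)^2 = (\<Sum>b\<in>Basis-{e}. (t\<bullet>b)^2 - (s\<bullet>b)^2)"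
      using sumsq[OF ns] sumsq[OF nt] by (simp add: sum_subtractf)
    then have "\<bar>(s\<bullet>e)^2 - (t\<bullet>e)^2\<bar> \<le> (\<Sum>b\<in>Basis-{e}. \<bar>(t\<bullet>b)^2 - (s\<bullet>b)^2\<bar>)"
      by (simp only: sum_abs)
    also have "\<dots> \<le> (\<Sum>b\<in>Basis-{e}. 2 * w)"
    proof (rule sum_mono)
      fix b :: 'a assume b: "b \<in> Basis - {e}"
      have "\<bar>s\<bullet>b\<bar> \<le> 1" using Basis_le_norm[of b s] b ns by simp
      moreover have "\<bar>t\<bullet>b\<bar> \<le> 1" using Basis_le_norm[of b t] b nt by simp
      ultimately have "\<bar>t\<bullet>b + s\<bullet>b\<bar> \<le> 2" by linarith
      moreover have "\<bar>t\<bullet>b - s\<bullet>b\<bar> \<le> w" using cb b by (simp add: abs_minus_commute)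
      moreover have "(t\<bullet>b)^2 - (s\<bullet>b)^2 = (t\<bullet>b - s\<bullet>b) * (t\<bullet>b + s\<bullet>b)"
        by (simp add: power2_eq_square algebra_simps)
      ultimately have "\<bar>(t\<bullet>b)^2 - (s\<bullet>b)^2\<bar> = \<bar>t\<bullet>b - s\<bullet>b\<bar> * \<bar>t\<bullet>b + s\<bullet>b\<bar>"
        "\<bar>t\<bullet>b - s\<bullet>b\<bar> * \<bar>t\<bullet>b + s\<bullet>b\<bar> \<le> w * 2"
        by (simp_all add: abs_mult mult_mono w)
      then show "\<bar>(t\<bullet>b)^2 - (s\<bullet>b)^2\<bar> \<le> 2 * w" by simp
    qed
    also have "\<dots> = 2 * (d - 1) * w" using cardBe by simp
    finally show ?thesis .
  qed
  have B: "\<bar>s\<bullet>e - t\<bullet>e\<bar> * (2 / d) \<le> \<bar>(s\<bullet>e)^2 - (t\<bullet>e)^2\<bar>"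
  proof -
    have "\<bar>s\<bullet>e + t\<bullet>e\<bar> = \<bar>s\<bullet>e\<bar> + \<bar>t\<bullet>e\<bar>"
      using sg by (auto simp: zero_less_mult_iff)
    also have "\<dots> \<ge> 2 / d" using se te unfolding d_def by simp
    finally have "\<bar>s\<bullet>e + t\<bullet>e\<bar> \<ge> 2 / d" .
    moreover have "(s\<bullet>e)^2 - (t\<bullet>e)^2 = (s\<bullet>e - t\<bullet>e) * (s\<bullet>e + t\<bullet>e)"
      by (simp add: power2_eq_square algebra_simps)
    ultimately show ?thesis
      using mult_left_mono[of "2 / d" "\<bar>s\<bullet>e + t\<bullet>e\<bar>" "\<bar>s\<bullet>e - t\<bullet>e\<bar>"] by (simp add: abs_mult)
  qed
  have C: "\<bar>s\<bullet>e - t\<bullet>e\<bar> \<le> d * (d - 1) * w"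
  proof -
    have "\<bar>s\<bullet>e - t\<bullet>e\<bar> * (2 / d) \<le> 2 * (d - 1) * w" using A B by linarith
    then have "\<bar>s\<bullet>e - t\<bullet>e\<bar> * 2 \<le> 2 * (d - 1) * w * d" using d1
      by (simp add: field_simps)
    then show ?thesis by (simp add: algebra_simps)
  qed
  have "norm (s - t) \<le> (\<Sum>b\<in>Basis. \<bar>(s - t)\<bullet>b\<bar>)" by (rule norm_le_l1)
  also have "\<dots> = \<bar>(s - t)\<bullet>e\<bar> + (\<Sum>b\<in>Basis-{e}. \<bar>(s - t)\<bullet>b\<bar>)"
    using e by (simp add: sum.remove)
  also have "\<dots> \<le> d * (d - 1) * w + (\<Sum>b\<in>Basis-{e}. w)"
    apply (rule add_mono)
    using C apply (simp add: inner_diff_left)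
    apply (rule sum_mono) using cb by (simp add: inner_diff_left)
  also have "\<dots> = d * (d - 1) * w + (d - 1) * w" by (simp only: sum_constant cardBe)
  also have "\<dots> = (d + 1) * (d - 1) * w" by (simp add: algebra_simps)
  finally show ?thesis unfolding d_def .
qed

lemma max_coord:
  fixes s :: "'a::euclidean_space"
  obtains e where "e \<in> Basis" "\<forall>b\<in>Basis. \<bar>s\<bullet>b\<bar> \<le> \<bar>s\<bullet>e\<bar>"
proof -
  let ?m = "Max ((\<lambda>b. \<bar>s\<bullet>b\<bar>) ` Basis)"
  have "?m \<in> (\<lambda>b. \<bar>s\<bullet>b\<bar>) ` Basis" by (rule Max_in) auto
  then obtain e where e': "?m = \<bar>s\<bullet>e\<bar>" "e \<in> Basis" by (rule imageE)
  then have e: "e \<in> Basis" "\<bar>s\<bullet>e\<bar> = ?m" by simp_all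
  have mx: "\<forall>b\<in>Basis. \<bar>s\<bullet>b\<bar> \<le> ?m" by (auto intro: Max_ge)
  show thesis by (rule that[OF e(1)]) (use e mx in simp)
qed

lemma max_coord_ge:
  fixes s e :: "'a::euclidean_space"
  assumes "norm s = 1" "e \<in> Basis" "\<forall>b\<in>Basis. \<bar>s\<bullet>b\<bar> \<le> \<bar>s\<bullet>e\<bar>"
  shows "\<bar>s\<bullet>e\<bar> \<ge> 1 / real DIM('a)"
proof -
  have "1 \<le> (\<Sum>b\<in>Basis. \<bar>s\<bullet>b\<bar>)" using norm_le_l1[of s] assms(1) by simp
  also have "\<dots> \<le> (\<Sum>b\<in>(Basis::'a set). \<bar>s\<bullet>e\<bar>)" by (rule sum_mono) (use assms(3) in auto)
  also have "\<dots> = real DIM('a) * \<bar>s\<bullet>e\<bar>" by simp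
  finally show ?thesis using DIM_positive[where 'a='a] by (simp add: field_simps)
qed

lemma floor_eq_close:
  fixes x y w :: real
  assumes "w > 0" "\<lfloor>x / w\<rfloor> = \<lfloor>y / w\<rfloor>"
  shows "\<bar>x - y\<bar> \<le> w"
proof -
  have a: "of_int \<lfloor>x / w\<rfloor> \<le> x / w" "x / w < of_int \<lfloor>x / w\<rfloor> + 1" by linarith+
  have b: "of_int \<lfloor>y / w\<rfloor> \<le> y / w" "y / w < of_int \<lfloor>y / w\<rfloor> + 1" by linarith+
  have "\<bar>x / w - y / w\<bar> < 1" using a b assms(2) by linarith
  then have "\<bar>x - y\<bar> / w < 1" using assms(1) by (simp add: diff_divide_distrib[symmetric])
  then show ?thesis using assms(1) by (simp add: field_simps)
qed

lemma aux4: "(d::real) * 2 * (a * b) = 2 * d * a * b" by simp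

lemma packing:
  fixes S :: "'a::euclidean_space set" and c :: 'a
  assumes fin: "finite S" and sph: "S \<subseteq> sphere 0 1"
    and sep: "\<forall>s\<in>S. \<forall>t\<in>S. s \<noteq> t \<longrightarrow> \<epsilon> \<le> dist s t"
    and ep: "0 < \<epsilon>" and R: "\<epsilon> \<le> R"
  shows "real (card {s\<in>S. dist s c < R}) \<le>
     2 * real DIM('a) * (3 * real DIM('a) * (real DIM('a) + 1)) ^ (DIM('a) - 1) * (R / \<epsilon>) ^ (DIM('a) - 1)"
proof -
  define d where "d = real DIM('a)"
  have d1: "d \<ge> 1" unfolding d_def using DIM_positive by (simp add: Suc_leI)
  define w where "w = \<epsilon> / (d * (d + 1))"
  have w0: "w > 0" unfolding w_def using d1 ep by simp
  have Rw: "R / w \<ge> 2"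
  proof -
    have dd: "d * (d + 1) \<ge> 1 * 2" by (rule mult_mono) (use d1 in auto)
    have "R / \<epsilon> \<ge> 1" using R ep by simp
    have "R / w = (R / \<epsilon>) * (d * (d + 1))" unfolding w_def by simp
    also have "\<dots> \<ge> 1 * 2" by (rule mult_mono) (use dd \<open>R / \<epsilon> \<ge> 1\<close> in auto)
    finally show ?thesis by simp
  qed
  define T where "T = {s\<in>S. dist s c < R}"
  define Te where "Te e = {s\<in>T. \<forall>b\<in>Basis. \<bar>s\<bullet>b\<bar> \<le> \<bar>s\<bullet>e\<bar>}" for e :: 'a
  have finT: "finite T" using fin unfolding T_def by simp
  have TU: "T \<subseteq> (\<Union>e\<in>Basis. Te e)"
  proof
    fix s assume "s \<in> T"
    obtain e where "e \<in> Basis" "\<forall>b\<in>Basis. \<bar>s\<bullet>b\<bar> \<le> \<bar>s\<bullet>e\<bar>" by (rule max_coord)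
    then show "s \<in> (\<Union>e\<in>Basis. Te e)" using \<open>s \<in> T\<close> unfolding Te_def by auto
  qed
  have cardTe: "real (card (Te e)) \<le> 2 * (3 * R / w) ^ (DIM('a) - 1)" if e: "e \<in> Basis" for e
  proof -
    define lo where "lo b = \<lfloor>(c\<bullet>b - R) / w\<rfloor>" for b
    define hi where "hi b = \<lfloor>(c\<bullet>b + R) / w\<rfloor>" for b
    define \<phi> where "\<phi> s = (0 < s\<bullet>e, restrict (\<lambda>b. \<lfloor>(s\<bullet>b) / w\<rfloor>) (Basis - {e}))" for s :: 'a
    have inj: "inj_on \<phi> (Te e)"
    proof (rule inj_onI)
      fix s t assume s: "s \<in> Te e" and t: "t \<in> Te e" and eq: "\<phi> s = \<phi> t"
      have ns: "norm s = 1" and nt: "norm t = 1" using s t sph unfolding Te_def T_def by auto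
      have se: "\<bar>s\<bullet>e\<bar> \<ge> 1 / real DIM('a)"
        using s ns e by (intro max_coord_ge) (auto simp: Te_def)
      have te: "\<bar>t\<bullet>e\<bar> \<ge> 1 / real DIM('a)"
        using t nt e by (intro max_coord_ge) (auto simp: Te_def)
      have pos: "0 < 1 / real DIM('a)" by simp
      have sgn: "(0 < s\<bullet>e) = (0 < t\<bullet>e)" using eq unfolding \<phi>_def by simp
      have sg: "(s\<bullet>e) * (t\<bullet>e) > 0"
      proof (cases "0 < s\<bullet>e")
        case True
        then show ?thesis using sgn by simp
      next
        case False
        then have "s\<bullet>e < 0" using se pos by linarith
        moreover have "t\<bullet>e < 0" using False sgn te pos by linarith
        ultimately show ?thesis by (simp add: mult_neg_neg)
      qed
      have cb: "\<forall>b\<in>Basis-{e}. \<bar>s\<bullet>b - t\<bullet>b\<bar> \<le> w"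
      proof
        fix b assume b: "b \<in> Basis - {e}"
        have "restrict (\<lambda>b. \<lfloor>(s\<bullet>b) / w\<rfloor>) (Basis - {e}) b = restrict (\<lambda>b. \<lfloor>(t\<bullet>b) / w\<rfloor>) (Basis - {e}) b"
          using eq unfolding \<phi>_def by simp
        then have "\<lfloor>(s\<bullet>b) / w\<rfloor> = \<lfloor>(t\<bullet>b) / w\<rfloor>" using b by simp
        then show "\<bar>s\<bullet>b - t\<bullet>b\<bar> \<le> w" using w0 by (rule floor_eq_close[rotated])
      qed
      have "norm (s - t) \<le> (d + 1) * (d - 1) * w"
        using coord_diff[OF ns nt e less_imp_le[OF w0] sg se te cb] unfolding d_def .
      also have "\<dots> < (d + 1) * d * w" using d1 w0 by simp
      also have "\<dots> = (d * (d + 1)) * w" by (simp add: algebra_simps)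
      also have "\<dots> = \<epsilon>"
      proof -
        have "d * (d + 1) \<noteq> 0" using d1 by simp
        then show ?thesis unfolding w_def by simp
      qed
      finally have "dist s t < \<epsilon>" by (simp add: dist_norm)
      moreover have "s \<in> S" "t \<in> S" using s t unfolding Te_def T_def by auto
      ultimately show "s = t" using sep by force
    qed
    have img: "\<phi> ` Te e \<subseteq> UNIV \<times> PiE (Basis - {e}) (\<lambda>b. {lo b..hi b})"
    proof
      fix x assume "x \<in> \<phi> ` Te e"
      then obtain s where s: "s \<in> Te e" and x: "x = \<phi> s" by auto
      have "dist s c < R" using s unfolding Te_def T_def by auto
      have "\<lfloor>(s\<bullet>b) / w\<rfloor> \<in> {lo b..hi b}" if b: "b \<in> Basis" for b
      proof -
        have "\<bar>(s - c)\<bullet>b\<bar> \<le> norm (s - c)" using b by (rule Basis_le_norm)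
        then have "\<bar>s\<bullet>b - c\<bullet>b\<bar> < R" using \<open>dist s c < R\<close> by (simp add: dist_norm inner_diff_left)
        then have "(c\<bullet>b - R) / w \<le> (s\<bullet>b) / w" "(s\<bullet>b) / w \<le> (c\<bullet>b + R) / w"
          using w0 by (auto intro: divide_right_mono)
        then show ?thesis unfolding lo_def hi_def by (auto intro: floor_mono)
      qed
      then show "x \<in> UNIV \<times> PiE (Basis - {e}) (\<lambda>b. {lo b..hi b})"
        unfolding x \<phi>_def by auto
    qed
    have "card (Te e) = card (\<phi> ` Te e)" using inj by (simp add: card_image)
    also have "\<dots> \<le> card ((UNIV::bool set) \<times> PiE (Basis - {e}) (\<lambda>b. {lo b..hi b}))"
      by (rule card_mono[OF _ img]) (simp add: finite_PiE)
    also have "\<dots> = 2 * (\<Prod>b\<in>Basis - {e}. nat (hi b - lo b + 1))"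
      by (simp add: card_cartesian_product card_PiE)
    finally have "real (card (Te e)) \<le> real (2 * (\<Prod>b\<in>Basis - {e}. nat (hi b - lo b + 1)))"
      by (simp only: of_nat_le_iff)
    also have "\<dots> = 2 * (\<Prod>b\<in>Basis - {e}. real (nat (hi b - lo b + 1)))"
      by (simp only: of_nat_mult of_nat_prod of_nat_numeral)
    also have "\<dots> \<le> 2 * (\<Prod>b\<in>Basis - {e}. 3 * R / w)"
    proof -
      have "(\<Prod>b\<in>Basis - {e}. real (nat (hi b - lo b + 1))) \<le> (\<Prod>b\<in>Basis - {e}. 3 * R / w)"
      proof (rule prod_mono)
        fix b assume "b \<in> Basis - {e}"
        have "real_of_int (hi b) \<le> (c\<bullet>b + R) / w" unfolding hi_def by simp
        moreover have "real_of_int (lo b) > (c\<bullet>b - R) / w - 1" unfolding lo_def by linarith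
        moreover have "(c\<bullet>b + R) / w - (c\<bullet>b - R) / w = 2 * (R / w)"
          by (simp add: diff_divide_distrib[symmetric])
        ultimately have "real_of_int (hi b - lo b + 1) \<le> 3 * R / w" using Rw by simp
        moreover have "hi b - lo b + 1 \<ge> 0"
        proof -
          have "(c\<bullet>b - R) / w \<le> (c\<bullet>b + R) / w" using w0 R ep by (intro divide_right_mono) auto
          then have "lo b \<le> hi b" unfolding lo_def hi_def by (rule floor_mono)
          then show ?thesis by simp
        qed
        ultimately show "0 \<le> real (nat (hi b - lo b + 1)) \<and> real (nat (hi b - lo b + 1)) \<le> 3 * R / w"
          by simp
      qed
      then show ?thesis by simp
    qed
    also have "\<dots> = 2 * (3 * R / w) ^ (DIM('a) - 1)"
      using e by (simp add: card_Diff_singleton)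
    finally show ?thesis .
  qed
  have "card T \<le> card (\<Union>e\<in>Basis. Te e)"
    by (rule card_mono[OF _ TU]) (auto simp: Te_def finT)
  also have "\<dots> \<le> (\<Sum>e\<in>Basis. card (Te e))" by (rule card_UN_le) simp
  finally have "real (card T) \<le> real (\<Sum>e\<in>Basis. card (Te e))"
    by (simp only: of_nat_le_iff)
  also have "\<dots> = (\<Sum>e\<in>Basis. real (card (Te e)))"
    by (simp only: of_nat_sum)
  also have "\<dots> \<le> (\<Sum>e\<in>(Basis::'a set). 2 * (3 * R / w) ^ (DIM('a) - 1))"
    by (rule sum_mono) (rule cardTe)
  also have "\<dots> = d * 2 * (3 * R / w) ^ (DIM('a) - 1)" unfolding d_def by simp
  also have "3 * R / w = 3 * d * (d + 1) * (R / \<epsilon>)" unfolding w_def by simp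
  finally have fin1: "real (card T) \<le> d * 2 * (3 * d * (d + 1) * (R / \<epsilon>)) ^ (DIM('a) - 1)" .
  have eq: "(3 * d * (d + 1) * (R / \<epsilon>)) ^ (DIM('a) - 1) = (3 * d * (d + 1)) ^ (DIM('a) - 1) * (R / \<epsilon>) ^ (DIM('a) - 1)"
    by (rule power_mult_distrib)
  have "d * 2 * (3 * d * (d + 1) * (R / \<epsilon>)) ^ (DIM('a) - 1) = 2 * d * (3 * d * (d + 1)) ^ (DIM('a) - 1) * (R / \<epsilon>) ^ (DIM('a) - 1)"
    unfolding eq by (rule aux4)
  with fin1 have final: "real (card T) \<le> 2 * d * (3 * d * (d + 1)) ^ (DIM('a) - 1) * (R / \<epsilon>) ^ (DIM('a) - 1)"
    by linarith
  then show ?thesis unfolding T_def d_def .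
qed



lemma greedy:
  fixes B :: "'a::metric_space set" and z :: "'a \<Rightarrow> real"
  assumes "finite B" "\<forall>s\<in>B. z s > 0"
  shows "\<exists>I\<subseteq>B. (\<forall>i\<in>I. \<forall>j\<in>I. i \<noteq> j \<longrightarrow> z i + z j \<le> dist i j) \<and> (\<forall>s\<in>B. \<exists>i\<in>I. dist s i < 2 * z i)"
  using assms
proof (induction "card B" arbitrary: B rule: less_induct)
  case less
  show ?case
  proof (cases "B = {}")
    case True
    then show ?thesis by auto
  next
    case False
    let ?m = "Max (z ` B)"
    have "?m \<in> z ` B" using False less.prems by (intro Max_in) auto
    then obtain m where m: "m \<in> B" "z m = ?m" by (metis imageE)
    have mx: "\<forall>s\<in>B. z s \<le> z m" using m less.prems by auto
    define B' where "B' = {s\<in>B. z s + z m \<le> dist s m}"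
    have "m \<notin> B'" using m less.prems unfolding B'_def by force
    have "B' \<subseteq> B" unfolding B'_def by auto
    with \<open>m \<notin> B'\<close> m(1) have "B' \<subset> B" by blast
    then have "card B' < card B" using less.prems by (intro psubset_card_mono) auto
    then obtain I' where I': "I' \<subseteq> B'" "\<forall>i\<in>I'. \<forall>j\<in>I'. i \<noteq> j \<longrightarrow> z i + z j \<le> dist i j"
      "\<forall>s\<in>B'. \<exists>i\<in>I'. dist s i < 2 * z i"
      using less.hyps[of B'] less.prems unfolding B'_def by auto
    show ?thesis
    proof (intro exI[of _ "insert m I'"] conjI ballI impI)
      show "insert m I' \<subseteq> B" using I'(1) m unfolding B'_def by auto
    next
      fix i j assume i: "i \<in> insert m I'" and j: "j \<in> insert m I'" and ij: "i \<noteq> j"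
      show "z i + z j \<le> dist i j"
      proof (cases "i = m")
        case True
        then have "j \<in> B'" using j ij I'(1) by auto
        then show ?thesis using True unfolding B'_def by (simp add: dist_commute add.commute)
      next
        case False
        note iF = False
        show ?thesis
        proof (cases "j = m")
          case True
          then have "i \<in> B'" using i iF I'(1) by auto
          then show ?thesis using True unfolding B'_def by simp
        next
          case False
          then show ?thesis using i j iF ij I'(2) by auto
        qed
      qed
    next
      fix s assume s: "s \<in> B"
      show "\<exists>i\<in>insert m I'. dist s i < 2 * z i"
      proof (cases "s \<in> B'")
        case True
        then show ?thesis using I'(3) by auto
      next
        case False
        then have "dist s m < z s + z m" using s unfolding B'_def by auto
        also have "\<dots> \<le> 2 * z m" using mx s by auto
        finally show ?thesis by auto
      qed
    qed
  qed
qed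

lemma coneL_eq: "coneL y \<zeta> = {x. x \<noteq> 0 \<and> x /\<^sub>R norm x \<in> capQ y \<zeta>}"
proof (rule set_eqI, rule iffI)
  fix x assume "x \<in> coneL y \<zeta>"
  then obtain r q where x: "x = r *\<^sub>R q" "q \<in> capQ y \<zeta>" "r > 0" unfolding coneL_def by auto
  have nq: "norm q = 1" using x(2) unfolding capQ_def by simp
  then have "x \<noteq> 0" using x by auto
  have "norm x = r" using x nq by simp
  then have "x /\<^sub>R norm x = q" using x by simp
  then show "x \<in> {x. x \<noteq> 0 \<and> x /\<^sub>R norm x \<in> capQ y \<zeta>}" using x \<open>x \<noteq> 0\<close> by simp
next
  fix x assume "x \<in> {x. x \<noteq> 0 \<and> x /\<^sub>R norm x \<in> capQ y \<zeta>}"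
  then have h: "x \<noteq> 0" "x /\<^sub>R norm x \<in> capQ y \<zeta>" by auto
  moreover have "x = norm x *\<^sub>R (x /\<^sub>R norm x)" using h by simp
  moreover have "norm x > 0" using h by simp
  ultimately show "x \<in> coneL y \<zeta>" unfolding coneL_def by blast
qed

lemma coneL_open: "open (coneL (y::'a::euclidean_space) \<zeta>)"
proof -
  have "coneL y \<zeta> = (- {0}) \<inter> (\<lambda>x. x /\<^sub>R norm x) -` ball y \<zeta>"
    unfolding coneL_eq capQ_def by (auto simp: norm_divide)
  moreover have "open ((- {0}) \<inter> (\<lambda>x::'a. x /\<^sub>R norm x) -` ball y \<zeta>)"
    by (rule continuous_open_preimage) (auto intro!: continuous_intros)
  ultimately show ?thesis by simp
qed

lemma cones_disjoint:
  assumes "a + b \<le> dist i j"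
  shows "coneL i a \<inter> coneL j b = {}"
proof (rule ccontr)
  assume "coneL i a \<inter> coneL j b \<noteq> {}"
  then obtain x where "x \<noteq> 0" "x /\<^sub>R norm x \<in> capQ i a" "x /\<^sub>R norm x \<in> capQ j b"
    unfolding coneL_eq by auto
  then have "dist i (x /\<^sub>R norm x) < a" "dist (x /\<^sub>R norm x) j < b" unfolding capQ_def
    by (auto simp: dist_commute)
  then have "dist i j < a + b" using dist_triangle[of i j "x /\<^sub>R norm x"] by linarith
  then show False using assms by simp
qed

lemma cone_sub:
  assumes "dist i y < \<delta>" "\<zeta> \<le> \<delta>"
  shows "coneL i \<zeta> \<subseteq> coneL y (2 * \<delta>)"
proof
  fix x assume "x \<in> coneL i \<zeta>"
  then have x: "x \<noteq> 0" "x /\<^sub>R norm x \<in> capQ i \<zeta>" unfolding coneL_eq by auto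
  then have "dist (x /\<^sub>R norm x) i < \<zeta>" "norm (x /\<^sub>R norm x) = 1" unfolding capQ_def
    by (auto simp: dist_commute)
  moreover have "dist (x /\<^sub>R norm x) y \<le> dist (x /\<^sub>R norm x) i + dist i y" by (rule dist_triangle)
  ultimately have "dist (x /\<^sub>R norm x) y < 2 * \<delta>" using assms by linarith
  then show "x \<in> coneL y (2 * \<delta>)" using x unfolding coneL_eq capQ_def by (auto simp: dist_commute)
qed



lemma energy_sum:
  fixes \<Omega> :: "'a::euclidean_space set" and g :: "'a \<Rightarrow> 'a"
  assumes gm: "set_borel_measurable lborel \<Omega> g" and fin: "finite I"
    and dj: "disjoint_family_on A I" and op: "\<forall>i\<in>I. open (A i)" and sub: "\<forall>i\<in>I. A i \<subseteq> G"
  shows "(\<Sum>i\<in>I. \<integral>\<^sup>+ x. indicator (A i \<inter> \<Omega>) x * ennreal (norm (g x) powr p) \<partial>lborel)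
      \<le> (\<integral>\<^sup>+ x. indicator (G \<inter> \<Omega>) x * ennreal (norm (g x) powr p) \<partial>lborel)"
proof -
  define h where "h x = ennreal (norm (indicator \<Omega> x *\<^sub>R g x) powr p)" for x
  have gm': "(\<lambda>x. indicator \<Omega> x *\<^sub>R g x) \<in> borel_measurable lborel"
    using gm unfolding set_borel_measurable_def .
  have hm: "h \<in> borel_measurable lborel" unfolding h_def using gm' by measurable
  have eq: "indicator (X \<inter> \<Omega>) x * ennreal (norm (g x) powr p) = indicator X x * h x" for X x
    unfolding h_def by (cases "x \<in> \<Omega>"; cases "x \<in> X") (auto simp: indicator_def)
  have im: "(\<lambda>x. indicator (A i) x * h x) \<in> borel_measurable lborel" if "i \<in> I" for i
  proof -
    have "A i \<in> sets lborel" using op that by (simp add: borel_open)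
    then show ?thesis using hm by measurable
  qed
  have "(\<Sum>i\<in>I. \<integral>\<^sup>+ x. indicator (A i \<inter> \<Omega>) x * ennreal (norm (g x) powr p) \<partial>lborel)
      = (\<Sum>i\<in>I. \<integral>\<^sup>+ x. indicator (A i) x * h x \<partial>lborel)" by (simp only: eq)
  also have "\<dots> = (\<integral>\<^sup>+ x. (\<Sum>i\<in>I. indicator (A i) x * h x) \<partial>lborel)"
    by (rule nn_integral_sum[symmetric]) (use im in auto)
  also have "\<dots> = (\<integral>\<^sup>+ x. indicator (\<Union>(A ` I)) x * h x \<partial>lborel)"
    by (simp add: sum_distrib_right[symmetric] indicator_UN_disjoint[OF fin dj])
  also have "\<dots> \<le> (\<integral>\<^sup>+ x. indicator G x * h x \<partial>lborel)"
  proof (rule nn_integral_mono)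
    fix x
    have "indicator (\<Union>(A ` I)) x \<le> (indicator G x :: ennreal)"
      using sub by (auto simp: indicator_def)
    then show "indicator (\<Union>(A ` I)) x * h x \<le> indicator G x * h x" by (rule mult_right_mono) simp
  qed
  also have "\<dots> = (\<integral>\<^sup>+ x. indicator (G \<inter> \<Omega>) x * ennreal (norm (g x) powr p) \<partial>lborel)"
    by (simp only: eq)
  finally show ?thesis .
qed



lemma main_count:
  fixes S :: "'a::euclidean_space set" and \<Omega> :: "'a set" and g :: "'a \<Rightarrow> 'a" and y :: 'a
  assumes p: "1 < p" and dp: "0 < \<delta>" and ep: "0 < \<epsilon>" "\<epsilon> \<le> \<delta>" and fin: "finite S"
    and sph: "S \<subseteq> sphere 0 1" and sep: "\<forall>s\<in>S. \<forall>t\<in>S. s \<noteq> t \<longrightarrow> \<epsilon> \<le> dist s t"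
    and gm: "set_borel_measurable lborel \<Omega> g"
    and E: "cone_energy p \<Omega> g y (2 * \<delta>) \<le> ennreal (M * \<delta> ^ (DIM('a) - 1))" and M: "0 < M"
  shows "real (card (bad_anchors p \<Omega> g S \<epsilon> \<delta> ((p - 1) / (2 * p)) \<inter> capQ y \<delta>))
    \<le> (2 * real DIM('a) * (3 * real DIM('a) * (real DIM('a) + 1)) ^ (DIM('a) - 1) * 2 ^ (DIM('a) - 1))
       * M * \<delta> powr ((p - 1) / (2 * p)) * (\<delta> / \<epsilon>) ^ (DIM('a) - 1)"
proof -
  define \<beta> where "\<beta> = (p - 1) / (2 * p)"
  have b0: "\<beta> > 0" unfolding \<beta>_def using p by simp
  define n where "n = DIM('a) - 1"
  have rn: "real n = real DIM('a) - 1" unfolding n_def using DIM_positive[where 'a='a]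
    by (simp add: of_nat_diff Suc_leI)
  define A0 where "A0 = 2 * real DIM('a) * (3 * real DIM('a) * (real DIM('a) + 1)) ^ n"
  have A00: "A0 \<ge> 0" unfolding A0_def by simp
  define Bd where "Bd = bad_anchors p \<Omega> g S \<epsilon> \<delta> \<beta> \<inter> capQ y \<delta>"
  have BdS: "Bd \<subseteq> S" unfolding Bd_def bad_anchors_def by auto
  have finB: "finite Bd" using BdS fin finite_subset by auto
  define P where "P s \<zeta> \<longleftrightarrow> \<zeta> \<in> {\<epsilon>..\<delta>} \<and> cone_energy p \<Omega> g s \<zeta> > ennreal (\<zeta> powr (real DIM('a) - 1 - \<beta>))" for s \<zeta>
  define z where "z s = (SOME \<zeta>. P s \<zeta>)" for s
  have zP: "P s (z s)" if "s \<in> Bd" for s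
  proof -
    have "\<exists>\<zeta>. P s \<zeta>" using that unfolding Bd_def bad_anchors_def P_def by auto
    then show ?thesis unfolding z_def by (rule someI_ex)
  qed
  have zr: "\<epsilon> \<le> z s" "z s \<le> \<delta>" if "s \<in> Bd" for s using zP[OF that] unfolding P_def by auto
  have zpos: "\<forall>s\<in>Bd. z s > 0" using zr ep by force
  obtain I where I: "I \<subseteq> Bd" "\<forall>i\<in>I. \<forall>j\<in>I. i \<noteq> j \<longrightarrow> z i + z j \<le> dist i j"
    "\<forall>s\<in>Bd. \<exists>i\<in>I. dist s i < 2 * z i"
    using greedy[OF finB zpos] by blast
  have finI: "finite I" using I(1) finB finite_subset by auto
  have "Bd \<subseteq> (\<Union>i\<in>I. {s\<in>S. dist s i < 2 * z i})" using I(3) BdS by blast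
  then have "card Bd \<le> card (\<Union>i\<in>I. {s\<in>S. dist s i < 2 * z i})"
    by (rule card_mono[rotated]) (use finI fin in auto)
  also have "\<dots> \<le> (\<Sum>i\<in>I. card {s\<in>S. dist s i < 2 * z i})" by (rule card_UN_le[OF finI])
  finally have "real (card Bd) \<le> real (\<Sum>i\<in>I. card {s\<in>S. dist s i < 2 * z i})"
    by (simp only: of_nat_le_iff)
  also have "\<dots> = (\<Sum>i\<in>I. real (card {s\<in>S. dist s i < 2 * z i}))"
    by (simp only: of_nat_sum)
  also have "\<dots> \<le> (\<Sum>i\<in>I. A0 * (2 * z i / \<epsilon>) ^ n)"
  proof (rule sum_mono)
    fix i assume "i \<in> I"
    then have "\<epsilon> \<le> 2 * z i" using zr I(1) ep by force
    from packing[OF fin sph sep ep(1) this, of i]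
    show "real (card {s\<in>S. dist s i < 2 * z i}) \<le> A0 * (2 * z i / \<epsilon>) ^ n"
      unfolding A0_def n_def .
  qed
  also have "\<dots> \<le> (\<Sum>i\<in>I. A0 * (2 ^ n / \<epsilon> ^ n) * (\<delta> powr \<beta> * z i powr (real DIM('a) - 1 - \<beta>)))"
  proof (rule sum_mono)
    fix i assume i: "i \<in> I"
    have zi: "0 < z i" "z i \<le> \<delta>" using zpos zr I(1) i by auto
    have e1: "(2 * z i / \<epsilon>) ^ n = (2 ^ n / \<epsilon> ^ n) * z i ^ n" by (simp add: power_divide power_mult_distrib)
    have "z i ^ n = z i powr (real n)" using zi by (simp add: powr_realpow)
    also have "\<dots> = z i powr \<beta> * z i powr (real DIM('a) - 1 - \<beta>)"
      unfolding rn by (simp add: powr_add[symmetric])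
    also have "\<dots> \<le> \<delta> powr \<beta> * z i powr (real DIM('a) - 1 - \<beta>)"
      by (rule mult_right_mono) (use zi b0 in \<open>auto intro: powr_mono2\<close>)
    finally have e2: "z i ^ n \<le> \<delta> powr \<beta> * z i powr (real DIM('a) - 1 - \<beta>)" .
    have e3: "(2 * z i / \<epsilon>) ^ n \<le> (2 ^ n / \<epsilon> ^ n) * (\<delta> powr \<beta> * z i powr (real DIM('a) - 1 - \<beta>))"
      unfolding e1 by (rule mult_left_mono[OF e2]) (use ep in simp)
    then show "A0 * (2 * z i / \<epsilon>) ^ n \<le> A0 * (2 ^ n / \<epsilon> ^ n) * (\<delta> powr \<beta> * z i powr (real DIM('a) - 1 - \<beta>))"
      using mult_left_mono[OF e3 A00] by (simp only: mult.assoc)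
  qed
  also have "\<dots> = A0 * (2 ^ n / \<epsilon> ^ n) * \<delta> powr \<beta> * (\<Sum>i\<in>I. z i powr (real DIM('a) - 1 - \<beta>))"
    by (simp add: sum_distrib_left mult.assoc)
  also have "\<dots> \<le> A0 * (2 ^ n / \<epsilon> ^ n) * \<delta> powr \<beta> * (M * \<delta> ^ n)"
  proof (rule mult_left_mono)
    have "(\<Sum>i\<in>I. ennreal (z i powr (real DIM('a) - 1 - \<beta>))) \<le> (\<Sum>i\<in>I. cone_energy p \<Omega> g i (z i))"
      by (rule sum_mono) (use zP I(1) in \<open>force simp: P_def\<close>)
    also have "\<dots> \<le> cone_energy p \<Omega> g y (2 * \<delta>)"
      unfolding cone_energy_def
    proof (rule energy_sum[OF gm finI])
      show "disjoint_family_on (\<lambda>i. coneL i (z i)) I"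
        unfolding disjoint_family_on_def using I(2) cones_disjoint by blast
      show "\<forall>i\<in>I. open (coneL i (z i))" by (simp add: coneL_open)
      show "\<forall>i\<in>I. coneL i (z i) \<subseteq> coneL y (2 * \<delta>)"
      proof
        fix i assume i: "i \<in> I"
        then have "i \<in> capQ y \<delta>" using I(1) unfolding Bd_def by auto
        then have "dist i y < \<delta>" unfolding capQ_def by (simp add: dist_commute)
        then show "coneL i (z i) \<subseteq> coneL y (2 * \<delta>)" using zr I(1) i by (intro cone_sub) auto
      qed
    qed
    also have "\<dots> \<le> ennreal (M * \<delta> ^ n)" using E unfolding n_def .
    finally have "ennreal (\<Sum>i\<in>I. z i powr (real DIM('a) - 1 - \<beta>)) \<le> ennreal (M * \<delta> ^ n)"
      by (simp add: sum_ennreal)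
    then show "(\<Sum>i\<in>I. z i powr (real DIM('a) - 1 - \<beta>)) \<le> M * \<delta> ^ n"
      using M dp by (simp add: ennreal_le_iff)
    show "0 \<le> A0 * (2 ^ n / \<epsilon> ^ n) * \<delta> powr \<beta>" using A00 ep by simp
  qed
  also have "\<dots> = (A0 * 2 ^ n) * M * \<delta> powr \<beta> * (\<delta> / \<epsilon>) ^ n"
    by (simp add: power_divide)
  finally show ?thesis unfolding Bd_def A0_def n_def \<beta>_def .
qed


theorem lemma3p4:
  fixes p :: real
  assumes "DIM('a::euclidean_space) \<ge> 2" and "1 < p" and "p < real DIM('a)"
  shows "\<exists>C>0. \<forall>(\<delta>::real) (\<epsilon>::real) (S::'a set) (K::'a \<Rightarrow> 'a set) (\<alpha>::real)
            (u::'a \<Rightarrow> real) (g::'a \<Rightarrow> 'a) (y::'a) (M::real).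
     0 < \<delta> \<and> \<delta> < 1/20 \<and> 0 < \<epsilon> \<and> \<epsilon> < \<delta>/20 \<and>
     finite S \<and> S \<subseteq> sphere 0 1 \<and> (\<forall>s\<in>S. \<forall>t\<in>S. s \<noteq> t \<longrightarrow> \<epsilon> \<le> dist s t) \<and>
     (\<forall>s\<in>S. compact (K s) \<and> K s \<subseteq> cball 0 1) \<and> 0 < \<alpha> \<and> \<alpha> \<le> 1/80 \<and>
     perron_solution p (- Gamma_set S K \<alpha> \<epsilon>) (\<lambda>_. 1) 0 u \<and>
     (\<forall>x\<in>Gamma_set S K \<alpha> \<epsilon>. u x = 1) \<and>
     weak_gradient (- Gamma_set S K \<alpha> \<epsilon>) u g \<and>
     y \<in> sphere 0 1 \<and> 0 < M \<and>
     cone_energy p (- Gamma_set S K \<alpha> \<epsilon>) g y (2 * \<delta>) \<le> ennreal (M * \<delta> ^ (DIM('a) - 1))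
     \<longrightarrow> real (card (bad_anchors p (- Gamma_set S K \<alpha> \<epsilon>) g S \<epsilon> \<delta> ((p - 1) / (2 * p)) \<inter> capQ y \<delta>))
         \<le> C * M * \<delta> powr ((p - 1) / (2 * p)) * (\<delta> / \<epsilon>) ^ (DIM('a) - 1)"
proof -
  define C where "C = (2 * real DIM('a) * (3 * real DIM('a) * (real DIM('a) + 1)) ^ (DIM('a) - 1) * 2 ^ (DIM('a) - 1))"
  have C0: "C > 0" unfolding C_def by simp
  show ?thesis
    apply (rule exI[of _ C])
    apply (intro conjI allI impI)
     apply (rule C0)
    apply (elim conjE)
    unfolding C_def
    apply (rule main_count[OF assms(2)])
    by (auto simp: weak_gradient_def)
qed

end
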